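(* Let $N>0$, let $\langle k\rangle>1$ (the average node degree), and let $\beta>0$, $\gamma\ge 0$, $p\ge 0$ be parameters. Consider the mean-field ODE system in which the numbers of susceptible nodes $S$, infected nodes $I$, active susceptible–susceptible edges $[SS]$ and active susceptible–infected edges $[SI]$ satisfy $$\dot S=-\beta[SI],\qquad \dot I=\beta[SI]-\gamma I,$$ $$\dot{[SI]}=\beta\left(\frac{\langle k\rangle-1}{\langle k\rangle}\,\frac{[SS][SI]-[SI]^2}{S}-[SI]\right)-(\gamma+p)[SI],$$ with initial data depending on $I_0\in(0,N/4)$ given by $S(0)=N-I_0$, $I(0)=I_0$, $[SI](0)=\langle k\rangle I_0$, $[SS](0)=\frac{\langle k\rangle N}{2}-\langle k\rangle I_0$. Let $$p_1^*=\beta\left(\frac{\langle k\rangle}{2}-\frac32\right)-\gamma,\qquad p_2^*=p_1^*-\gamma+\frac{\gamma^2}{\beta\langle k\rangle}.$$ If $p>p_2^*$, then $\lim_{I_0\to 0}\frac{1}{I_0}\ddot I(0)<0$, where $\ddot I(0)=\beta\,\dot{[SI]}(0)-\gamma\,\dot I(0)$ is computed from the system above.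
   Context: This is an SIR epidemic on an adaptive network with temporary link deactivation: susceptible–infected edges are deactivated at rate $p$, infection occurs at rate $\beta$ along active $[SI]$ edges, and infected nodes recover at rate $\gamma$. The equation for $[SI]$ arises from the edge equation $\dot{[SI]}=\beta[SSI]-\beta([SI]+[ISI])-\gamma[SI]-p[SI]$ closed by the moment closure $[ABC]\approx\frac{\langle k\rangle-1}{\langle k\rangle}\frac{[AB][BC]}{B}$ for triple links. The total number of edges is $\bar N=\langle k\rangle N/2=[SS](0)+[SI](0)$. With $R_0=\beta\langle k\rangle/\gamma$ one has $p_2^*=p_1^*-\gamma(1-1/R_0)$. *)

theory Defs
  imports Complex_Main
begin

definition S_rhs :: "real \<Rightarrow> real \<Rightarrow> real" where
  "S_rhs \<beta> SI = - \<beta> * SI"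

definition I_rhs :: "real \<Rightarrow> real \<Rightarrow> real \<Rightarrow> real \<Rightarrow> real" where
  "I_rhs \<beta> \<gamma> I SI = \<beta> * SI - \<gamma> * I"

definition SI_rhs :: "real \<Rightarrow> real \<Rightarrow> real \<Rightarrow> real \<Rightarrow> real \<Rightarrow> real \<Rightarrow> real \<Rightarrow> real" where
  "SI_rhs \<beta> \<gamma> p k S SS SI =
     \<beta> * ((k - 1) / k * (SS * SI - SI ^ 2) / S - SI) - (\<gamma> + p) * SI"

definition S0 :: "real \<Rightarrow> real \<Rightarrow> real" where "S0 N I0 = N - I0"
definition SI0 :: "real \<Rightarrow> real \<Rightarrow> real" where "SI0 k I0 = k * I0"
definition SS0 :: "real \<Rightarrow> real \<Rightarrow> real \<Rightarrow> real" where "SS0 N k I0 = k * N / 2 - k * I0"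

definition Iddot0 :: "real \<Rightarrow> real \<Rightarrow> real \<Rightarrow> real \<Rightarrow> real \<Rightarrow> real \<Rightarrow> real" where
  "Iddot0 N k \<beta> \<gamma> p I0 =
     \<beta> * SI_rhs \<beta> \<gamma> p k (S0 N I0) (SS0 N k I0) (SI0 k I0)
     - \<gamma> * I_rhs \<beta> \<gamma> I0 (SI0 k I0)"

definition p1star :: "real \<Rightarrow> real \<Rightarrow> real \<Rightarrow> real" where
  "p1star \<beta> \<gamma> k = \<beta> * (k / 2 - 3 / 2) - \<gamma>"

definition p2star :: "real \<Rightarrow> real \<Rightarrow> real \<Rightarrow> real" where
  "p2star \<beta> \<gamma> k = p1star \<beta> \<gamma> k - \<gamma> + \<gamma> ^ 2 / (\<beta> * k)"

end

theory Submission
  imports Defs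
begin

theorem mainTheorem2:
  fixes N k \<beta> \<gamma> p :: real
  assumes "N > 0" and "k > 1" and "\<beta> > 0" and "\<gamma> \<ge> 0" and "p \<ge> 0"
    and "p > p2star \<beta> \<gamma> k"
  shows "\<exists>L. ((\<lambda>I0. Iddot0 N k \<beta> \<gamma> p I0 / I0) \<longlongrightarrow> L) (at_right 0) \<and> L < 0"
proof -
  define g where "g = (\<lambda>x::real. \<beta> * (\<beta> * ((k-1)*(k*N/2 - 2*k*x)/(N-x) - k) - (\<gamma>+p)*k) - \<gamma>*(\<beta>*k-\<gamma>))"
  have ev: "\<forall>\<^sub>F x in at_right 0. g x = Iddot0 N k \<beta> \<gamma> p x / x"
  proof -
    have "\<forall>\<^sub>F x in at_right (0::real). 0 < x \<and> x < N"
      using eventually_at_right_real[OF assms(1)] by simp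
    then show ?thesis
    proof (rule eventually_mono)
      fix x :: real assume x: "0 < x \<and> x < N"
      hence nx: "N - x \<noteq> 0" by simp
      have k0: "k \<noteq> 0" using assms(2) by simp
      have key: "(k - 1) / k * ((k*N/2 - k*x) * (k*x) - (k*x)^2) / (N - x)
          = x * ((k-1)*(k*N/2 - 2*k*x)/(N-x))"
        using k0 nx by (simp add: field_simps power2_eq_square)
      have "Iddot0 N k \<beta> \<gamma> p x = x * g x"
        unfolding g_def Iddot0_def SI_rhs_def I_rhs_def S0_def SS0_def SI0_def key
        by (simp add: algebra_simps)
      then show "g x = Iddot0 N k \<beta> \<gamma> p x / x"
        using x by simp
    qed
  qed
  have "(g \<longlongrightarrow> g 0) (at_right 0)"
    unfolding g_def using assms(1) by (intro tendsto_intros) auto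
  hence lim: "((\<lambda>I0. Iddot0 N k \<beta> \<gamma> p I0 / I0) \<longlongrightarrow> g 0) (at_right 0)"
    using tendsto_cong[OF ev] by simp
  have g0: "g 0 = \<beta>*k*(p2star \<beta> \<gamma> k - p)"
    using assms(1-3) unfolding g_def p2star_def p1star_def
    by (simp add: field_simps power2_eq_square)
  have "\<beta>*k > 0" using assms(2,3) by simp
  moreover have "p2star \<beta> \<gamma> k - p < 0" using assms(6) by simp
  ultimately have "g 0 < 0" unfolding g0 by (rule mult_pos_neg)
  with lim show ?thesis by (intro exI[of _ "g 0"]) simp
qed

end
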